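(* Let $f_1,\dots,f_n:\mathbb{R}^d\to\mathbb{R}$ be such that each $f_i$ is $L_i$-smooth and $\mu_i$-strongly convex with minimizer $x_i$. Let $\alpha\in(0,1)$ and $\tilde f(x) = \frac{1}{n}\sum_{i=1}^n f_i(\alpha x + (1-\alpha)x_i)$, with minimizer $x^*$. Let $\overline{\mu} = \frac{1}{n}\sum_i\mu_i$. Then \[ \frac{1}{n}\sum_{i=1}^n\|x_i - x^*\|^2 \leq \frac{\max_i L_i}{\overline{\mu}}\max_{i,j}\|x_i - x_j\|^2. \]
   Context: A differentiable $g$ is $L$-smooth if $\|\nabla g(x)-\nabla g(y)\|\leq L\|x-y\|$ for all $x,y$, and $\mu$-strongly convex if $g(x)\geq g(y)+\langle\nabla g(y),x-y\rangle+\frac{\mu}{2}\|x-y\|^2$ for all $x,y$. *)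

theory Defs
  imports "HOL-Analysis.Analysis"
begin

definition L_smooth :: "real \<Rightarrow> ('a::real_inner \<Rightarrow> real) \<Rightarrow> bool" where
  "L_smooth L f \<longleftrightarrow> (\<exists>g. (\<forall>x. GDERIV f x :> g x) \<and>
      (\<forall>x y. norm (g x - g y) \<le> L * norm (x - y)))"

definition strongly_convex :: "real \<Rightarrow> ('a::real_inner \<Rightarrow> real) \<Rightarrow> bool" where
  "strongly_convex \<mu> f \<longleftrightarrow> (\<exists>g. (\<forall>x. GDERIV f x :> g x) \<and>
      (\<forall>x y. f x \<ge> f y + inner (g y) (x - y) + \<mu> / 2 * (norm (x - y))\<^sup>2))"

end

theory Submission
  imports Defs
begin
lemma gderiv_unique:
  assumes "GDERIV F x :> D1" "GDERIV F x :> D2" shows "D1 = D2"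
proof -
  have "(\<lambda>h. inner h D1) = (\<lambda>h. inner h D2)"
    using has_derivative_unique assms unfolding gderiv_def by blast
  then have "inner (D1 - D2) D1 = inner (D1 - D2) D2" by metis
  then have "inner (D1 - D2) (D1 - D2) = 0" by (simp add: inner_diff_right)
  then show ?thesis by simp
qed

lemma grad_zero:
  fixes F :: "'a::real_inner \<Rightarrow> real"
  assumes "(F has_derivative (\<lambda>h. inner h D)) (at x)" "\<And>y. F x \<le> F y" shows "D = 0"
proof -
  have "(\<lambda>h. inner h D) = (\<lambda>h. 0)"
    by (rule has_derivative_local_min[OF assms(1)]) (simp add: assms(2))
  then have "inner D D = 0" by metis
  then show ?thesis by simp
qed

lemma descent:
  fixes F :: "'a::real_inner \<Rightarrow> real"
  assumes d: "\<And>x. GDERIV F x :> g x"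
    and lip: "\<And>x y. norm (g x - g y) \<le> L * norm (x - y)"
  shows "F (x + h) \<le> F x + inner (g x) h + L / 2 * (norm h)\<^sup>2"
proof -
  define \<phi> where "\<phi> t = F (x + t *\<^sub>R h) - t * inner (g x) h - L / 2 * t\<^sup>2 * (norm h)\<^sup>2" for t
  have der: "DERIV \<phi> t :> inner (g (x + t *\<^sub>R h)) h - inner (g x) h - L * t * (norm h)\<^sup>2" for t
  proof -
    have a: "((\<lambda>t. x + t *\<^sub>R h) has_derivative (\<lambda>s. s *\<^sub>R h)) (at t)"
      by (intro derivative_eq_intros) auto
    have b: "((\<lambda>t. F (x + t *\<^sub>R h)) has_derivative (\<lambda>s. inner (s *\<^sub>R h) (g (x + t *\<^sub>R h)))) (at t)"
      using has_derivative_compose[OF a d[unfolded gderiv_def]] by simp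
    have "((\<lambda>t. F (x + t *\<^sub>R h)) has_real_derivative inner (g (x + t *\<^sub>R h)) h) (at t)"
      using b unfolding has_field_derivative_def by (simp add: inner_commute mult.commute[of _ "inner h _"])
    then show ?thesis unfolding \<phi>_def
      by (auto intro!: derivative_eq_intros simp: power2_eq_square)
  qed
  have "\<phi> 1 \<le> \<phi> 0"
  proof (rule DERIV_nonpos_imp_nonincreasing[of 0 1])
    fix t :: real assume t: "0 \<le> t" "t \<le> 1"
    have "inner (g (x + t *\<^sub>R h)) h - inner (g x) h = inner (g (x + t *\<^sub>R h) - g x) h"
      by (simp add: inner_diff_left)
    also have "\<dots> \<le> norm (g (x + t *\<^sub>R h) - g x) * norm h" by (rule norm_cauchy_schwarz)
    also have "\<dots> \<le> L * norm (t *\<^sub>R h) * norm h"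
      using lip[of "x + t *\<^sub>R h" x] by (simp add: mult_right_mono)
    also have "\<dots> = L * t * (norm h)\<^sup>2" using t by (simp add: power2_eq_square)
    finally show "\<exists>y. DERIV \<phi> t :> y \<and> y \<le> 0" using der by force
  qed simp
  then show ?thesis unfolding \<phi>_def by simp
qed

theorem proposition6:
  fixes f :: "nat \<Rightarrow> 'a::euclidean_space \<Rightarrow> real"
    and L \<mu> :: "nat \<Rightarrow> real"
    and xm :: "nat \<Rightarrow> 'a"
    and xstar :: 'a
    and \<alpha> :: real
    and n :: nat
  assumes n_pos: "n \<ge> 1"
    and smooth: "\<And>i. i < n \<Longrightarrow> L_smooth (L i) (f i)"
    and mu_pos: "\<And>i. i < n \<Longrightarrow> \<mu> i > 0"
    and sconv: "\<And>i. i < n \<Longrightarrow> strongly_convex (\<mu> i) (f i)"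
    and xm_min: "\<And>i y. i < n \<Longrightarrow> f i (xm i) \<le> f i y"
    and alpha: "0 < \<alpha>" "\<alpha> < 1"
    and xstar_min: "\<And>y. (1 / real n) * (\<Sum>i<n. f i (\<alpha> *\<^sub>R xstar + (1 - \<alpha>) *\<^sub>R xm i))
                       \<le> (1 / real n) * (\<Sum>i<n. f i (\<alpha> *\<^sub>R y + (1 - \<alpha>) *\<^sub>R xm i))"
  shows "(1 / real n) * (\<Sum>i<n. (norm (xm i - xstar))\<^sup>2)
           \<le> (Max (L ` {..<n}) / ((1 / real n) * (\<Sum>i<n. \<mu> i)))
              * Max ((\<lambda>(i, j). (norm (xm i - xm j))\<^sup>2) ` ({..<n} \<times> {..<n}))"
proof -
  define G where "G i = (SOME g. (\<forall>x. GDERIV (f i) x :> g x) \<and>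
      (\<forall>x y. norm (g x - g y) \<le> L i * norm (x - y)))" for i
  have Gd: "GDERIV (f i) x :> G i x" and Glip: "norm (G i x - G i y) \<le> L i * norm (x - y)"
    if "i < n" for i x y
  proof -
    have "\<exists>g. (\<forall>x. GDERIV (f i) x :> g x) \<and> (\<forall>x y. norm (g x - g y) \<le> L i * norm (x - y))"
      using smooth[OF that] unfolding L_smooth_def .
    from someI_ex[OF this] show "GDERIV (f i) x :> G i x" "norm (G i x - G i y) \<le> L i * norm (x - y)"
      unfolding G_def by blast+
  qed
  have Gsc: "f i x \<ge> f i y + inner (G i y) (x - y) + \<mu> i / 2 * (norm (x - y))\<^sup>2"
    if hi: "i < n" for i x y
  proof -
    obtain g where g: "\<And>x. GDERIV (f i) x :> g x"
      "\<And>x y. f i x \<ge> f i y + inner (g y) (x - y) + \<mu> i / 2 * (norm (x - y))\<^sup>2"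
      using sconv[OF hi] unfolding strongly_convex_def by blast
    have "g y = G i y" using gderiv_unique[OF g(1) Gd[OF hi]] .
    then show ?thesis using g(2)[of y x] by simp
  qed
  have G0: "G i (xm i) = 0" if "i < n" for i
    using grad_zero[OF Gd[OF that, unfolded gderiv_def]] xm_min[OF that] by blast
  have Lnn: "L i \<ge> 0" if "i < n" for i
  proof -
    obtain b :: 'a where b: "b \<in> Basis" using nonempty_Basis by blast
    have "0 \<le> norm (G i b - G i 0)" by simp
    also have "\<dots> \<le> L i * norm (b - 0)" by (rule Glip[OF that])
    finally have "0 \<le> L i * norm b" by simp
    moreover have "norm b > 0" using b by (simp add: nonzero_Basis)
    ultimately show ?thesis by (simp add: zero_le_mult_iff)
  qed
  have npos: "real n > 0" using n_pos by simp
  define y where "y i = \<alpha> *\<^sub>R xstar + (1 - \<alpha>) *\<^sub>R xm i" for i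
  define S where "S z = (\<Sum>i<n. f i (\<alpha> *\<^sub>R z + (1 - \<alpha>) *\<^sub>R xm i))" for z
  have Smin: "S xstar \<le> S z" for z
    using xstar_min[of z] npos unfolding S_def by (simp add: divide_simps)
  have Sder: "(S has_derivative (\<lambda>h. inner h (\<Sum>i<n. \<alpha> *\<^sub>R G i (y i)))) (at xstar)"
  proof -
    have "((\<lambda>z. f i (\<alpha> *\<^sub>R z + (1 - \<alpha>) *\<^sub>R xm i)) has_derivative (\<lambda>h. inner h (\<alpha> *\<^sub>R G i (y i)))) (at xstar)"
      if "i < n" for i
    proof -
      have a: "((\<lambda>z. \<alpha> *\<^sub>R z + (1 - \<alpha>) *\<^sub>R xm i) has_derivative (\<lambda>h. \<alpha> *\<^sub>R h)) (at xstar)"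
        by (intro derivative_eq_intros) auto
      show ?thesis
        using has_derivative_compose[OF a Gd[OF that, of "y i", unfolded gderiv_def y_def]]
        by (simp add: y_def)
    qed
    then have "(S has_derivative (\<lambda>h. \<Sum>i<n. inner h (\<alpha> *\<^sub>R G i (y i)))) (at xstar)"
      unfolding S_def by (intro has_derivative_sum) auto
    then show ?thesis by (simp add: inner_sum_right)
  qed
  have Gsum: "(\<Sum>i<n. \<alpha> *\<^sub>R G i (y i)) = 0"
    using grad_zero[OF Sder] Smin by blast
  define D where "D = Max ((\<lambda>(i, j). (norm (xm i - xm j))\<^sup>2) ` ({..<n} \<times> {..<n}))"
  define Lm where "Lm = Max (L ` {..<n})"
  have DD: "(norm (xm i - xm j))\<^sup>2 \<le> D" if "i < n" "j < n" for i j
    unfolding D_def by (rule Max_ge) (use that in auto)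
  have LL: "L i \<le> Lm" if "i < n" for i
    unfolding Lm_def by (rule Max_ge) (use that in auto)
  have key: "(\<Sum>i<n. \<mu> i) * (norm (xm k - xstar))\<^sup>2 \<le> real n * Lm * D" if k: "k < n" for k
  proof -
    define z where "z i = \<alpha> *\<^sub>R xm k + (1 - \<alpha>) *\<^sub>R xm i" for i
    have lower: "f i (z i) \<ge> f i (y i) + inner (\<alpha> *\<^sub>R G i (y i)) (xm k - xstar)
        + \<alpha>\<^sup>2 / 2 * (\<mu> i * (norm (xm k - xstar))\<^sup>2)" if "i < n" for i
    proof -
      have e: "z i - y i = \<alpha> *\<^sub>R (xm k - xstar)"
        unfolding z_def y_def by (simp add: algebra_simps)
      show ?thesis using Gsc[OF that, of "y i" "z i"] unfolding e
        by (simp add: power_mult_distrib abs_of_pos[OF alpha(1)] mult_ac)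
    qed
    have upper: "f i (z i) \<le> f i (y i) + \<alpha>\<^sup>2 / 2 * (Lm * D)" if i: "i < n" for i
    proof -
      have e: "z i = xm i + \<alpha> *\<^sub>R (xm k - xm i)"
        unfolding z_def by (simp add: algebra_simps)
      have "f i (z i) \<le> f i (xm i) + inner (G i (xm i)) (\<alpha> *\<^sub>R (xm k - xm i))
          + L i / 2 * (norm (\<alpha> *\<^sub>R (xm k - xm i)))\<^sup>2"
        unfolding e by (rule descent[OF Gd[OF i] Glip[OF i]])
      also have "\<dots> = f i (xm i) + \<alpha>\<^sup>2 / 2 * (L i * (norm (xm k - xm i))\<^sup>2)"
        using G0[OF i] by (simp add: power_mult_distrib abs_of_pos[OF alpha(1)] mult_ac)
      also have "L i * (norm (xm k - xm i))\<^sup>2 \<le> Lm * D"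
        using LL[OF i] Lnn[OF i] DD[OF k i]
        by (meson mult_mono order_trans zero_le_power2)
      then have "f i (xm i) + \<alpha>\<^sup>2 / 2 * (L i * (norm (xm k - xm i))\<^sup>2)
          \<le> f i (xm i) + \<alpha>\<^sup>2 / 2 * (Lm * D)"
        by (simp add: mult_left_mono)
      also have "f i (xm i) \<le> f i (y i)" by (rule xm_min[OF i])
      finally show ?thesis by simp
    qed
    have "(\<Sum>i<n. f i (y i)) + inner (\<Sum>i<n. \<alpha> *\<^sub>R G i (y i)) (xm k - xstar)
        + \<alpha>\<^sup>2 / 2 * ((\<Sum>i<n. \<mu> i) * (norm (xm k - xstar))\<^sup>2)
        = (\<Sum>i<n. f i (y i) + inner (\<alpha> *\<^sub>R G i (y i)) (xm k - xstar)
        + \<alpha>\<^sup>2 / 2 * (\<mu> i * (norm (xm k - xstar))\<^sup>2))"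
      by (simp add: sum.distrib inner_sum_left sum_distrib_left sum_distrib_right)
    also have "\<dots> \<le> (\<Sum>i<n. f i (z i))" by (rule sum_mono) (use lower in auto)
    also have "\<dots> \<le> (\<Sum>i<n. f i (y i) + \<alpha>\<^sup>2 / 2 * (Lm * D))" by (rule sum_mono) (use upper in auto)
    also have "\<dots> = (\<Sum>i<n. f i (y i)) + real n * (\<alpha>\<^sup>2 / 2 * (Lm * D))"
      by (simp add: sum.distrib)
    finally have "\<alpha>\<^sup>2 / 2 * ((\<Sum>i<n. \<mu> i) * (norm (xm k - xstar))\<^sup>2)
        \<le> \<alpha>\<^sup>2 / 2 * (real n * Lm * D)"
      using Gsum by (simp add: algebra_simps)
    moreover have "\<alpha>\<^sup>2 / 2 > 0" using alpha by simp
    ultimately show ?thesis by (meson mult_le_cancel_left_pos)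
  qed
  have mupos: "(\<Sum>i<n. \<mu> i) > 0"
    by (rule sum_pos) (use mu_pos n_pos in \<open>auto simp: lessThan_empty_iff\<close>)
  have "(\<Sum>k<n. (norm (xm k - xstar))\<^sup>2) \<le> (\<Sum>k<n. real n * Lm * D / (\<Sum>i<n. \<mu> i))"
    by (rule sum_mono) (use key mupos in \<open>auto simp: pos_le_divide_eq mult.commute\<close>)
  also have "\<dots> = real n * (real n * Lm * D / (\<Sum>i<n. \<mu> i))" by simp
  finally have "(1 / real n) * (\<Sum>k<n. (norm (xm k - xstar))\<^sup>2) \<le> (1 / real n) * (real n * (real n * Lm * D / (\<Sum>i<n. \<mu> i)))"
    using npos by (intro mult_left_mono) auto
  also have "\<dots> = real n * Lm * D / (\<Sum>i<n. \<mu> i)" using npos by simp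
  also have "\<dots> = (Lm / ((1 / real n) * (\<Sum>i<n. \<mu> i))) * D"
    using npos by (simp add: field_simps)
  finally show ?thesis unfolding Lm_def D_def .
qed

end
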